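(* Let $R$, $G$, $*$, $\sigma$ and $\mathcal{S}$ be as in the context, and suppose $\mathcal{S}$ is anticommutative. For $x\in G$ put $c_x=x^*x^{-1}$. Then: - for every $x\in G$, $x^*=c_x x$, with $c_x\in G_*\cap\mathcal{Z}(G)$ and $c_x^2=1$; - for all $x,y\in G$, $c_{xy}=c_xc_y(x,y)$; - if $(x,y)\neq 1$, then $c_{xy}\in\{c_x,\ c_y,\ (x,y)\}$.
   Context: Throughout, $R$ is a commutative ring with unity with $\operatorname{char}(R)\neq 2$, and $\mathcal{U}(R)$ is its unit group. $G$ is a group with an involution $*$, i.e. a map $x\mapsto x^*$ with $(xy)^*=y^*x^*$ and $(x^* )^*=x$. The map $\sigma:G\to\mathcal{U}(R)$ is a nontrivial group homomorphism with kernel $N=\ker\sigma$, and it is compatible with $*$: $xx^*\in N$ for all $x\in G$. The group ring $RG$ carries the involution $\left(\sum_{x\in G}\alpha_x x\right)^{\sigma*}=\sum_{x\in G}\sigma(x)\alpha_x x^*$. Write $G_*=\{x\in G: x^*=x\}$ and $N_*=G_*\cap N$. Let $\mathcal{S}$ be the $R$-submodule of $RG$ spanned by the union of the following three sets: - $2\mathcal{S}_1=\{2x: x\in N_*\}$; - $\mathcal{S}_2=\{\alpha x: x\in G_*\setminus N,\ \alpha\in R,\ \alpha(1-\sigma(x))=0\}$; - $\mathcal{S}_3=\{x+\sigma(x)x^*: x\in G\setminus G_*\}$. $\mathcal{S}$ is called anticommutative if $ab+ba=0$ for all $a,b\in\mathcal{S}$. $\mathcal{Z}(G)$ is the center of $G$,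 and the commutator is $(x,y)=x^{-1}y^{-1}xy$. *)

theory Defs
  imports "HOL-Algebra.Group"
begin

text \<open>Group ring elements of R G are modelled as finitely supported functions
  'g => 'r (supported in carrier G). Basis element x is the function delta x.\<close>

definition gdelta :: "'g \<Rightarrow> 'r::comm_ring_1 \<Rightarrow> ('g \<Rightarrow> 'r)" where
  "gdelta x a = (\<lambda>z. if z = x then a else 0)"

definition gsupp :: "('g \<Rightarrow> 'r::zero) \<Rightarrow> 'g set" where
  "gsupp f = {x. f x \<noteq> 0}"

definition gmult :: "('g, 'b) monoid_scheme \<Rightarrow> ('g \<Rightarrow> 'r::comm_ring_1) \<Rightarrow> ('g \<Rightarrow> 'r) \<Rightarrow> ('g \<Rightarrow> 'r)" where
  "gmult G f h = (\<lambda>z. \<Sum>x\<in>gsupp f. \<Sum>y\<in>gsupp h. if x \<otimes>\<^bsub>G\<^esub> y = z then f x * h y else 0)"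

definition sym_elems :: "('g, 'b) monoid_scheme \<Rightarrow> ('g \<Rightarrow> 'g) \<Rightarrow> 'g set" where
  "sym_elems G star = {x \<in> carrier G. star x = x}"

definition sigma_kernel :: "('g, 'b) monoid_scheme \<Rightarrow> ('g \<Rightarrow> 'r::comm_ring_1) \<Rightarrow> 'g set" where
  "sigma_kernel G \<sigma> = {x \<in> carrier G. \<sigma> x = 1}"

definition S_gens :: "('g, 'b) monoid_scheme \<Rightarrow> ('g \<Rightarrow> 'g) \<Rightarrow> ('g \<Rightarrow> 'r::comm_ring_1) \<Rightarrow> ('g \<Rightarrow> 'r) set" where
  "S_gens G star \<sigma> =
     {gdelta x 2 | x. x \<in> sym_elems G star \<inter> sigma_kernel G \<sigma>}
   \<union> {gdelta x \<alpha> | x \<alpha>. x \<in> sym_elems G star - sigma_kernel G \<sigma> \<and> \<alpha> * (1 - \<sigma> x) = 0}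
   \<union> {(\<lambda>z. gdelta x 1 z + gdelta (star x) (\<sigma> x) z) | x. x \<in> carrier G - sym_elems G star}"

inductive_set rspan :: "('g \<Rightarrow> 'r::comm_ring_1) set \<Rightarrow> ('g \<Rightarrow> 'r) set" for A where
  zero: "(\<lambda>_. 0) \<in> rspan A"
| step: "f \<in> rspan A \<Longrightarrow> b \<in> A \<Longrightarrow> (\<lambda>z. f z + r * b z) \<in> rspan A"

definition S_module :: "('g, 'b) monoid_scheme \<Rightarrow> ('g \<Rightarrow> 'g) \<Rightarrow> ('g \<Rightarrow> 'r::comm_ring_1) \<Rightarrow> ('g \<Rightarrow> 'r) set" where
  "S_module G star \<sigma> = rspan (S_gens G star \<sigma>)"

definition anticommutative :: "('g, 'b) monoid_scheme \<Rightarrow> ('g \<Rightarrow> 'r::comm_ring_1) set \<Rightarrow> bool" where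
  "anticommutative G S \<longleftrightarrow> (\<forall>a\<in>S. \<forall>b\<in>S. (\<lambda>z. gmult G a b z + gmult G b a z) = (\<lambda>_. 0))"

definition group_center :: "('g, 'b) monoid_scheme \<Rightarrow> 'g set" where
  "group_center G = {z \<in> carrier G. \<forall>y\<in>carrier G. z \<otimes>\<^bsub>G\<^esub> y = y \<otimes>\<^bsub>G\<^esub> z}"

definition gcomm :: "('g, 'b) monoid_scheme \<Rightarrow> 'g \<Rightarrow> 'g \<Rightarrow> 'g" where
  "gcomm G x y = inv\<^bsub>G\<^esub> x \<otimes>\<^bsub>G\<^esub> inv\<^bsub>G\<^esub> y \<otimes>\<^bsub>G\<^esub> x \<otimes>\<^bsub>G\<^esub> y"

end

theory Submission
  imports Defs
begin


lemma two_ne_zero_char: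
  assumes "CHAR('r::comm_ring_1) \<noteq> 2" "(1::'r) \<noteq> 0"
  shows "(2::'r) \<noteq> 0"
proof
  assume h: "(2::'r) = 0"
  have "of_nat 2 = (0::'r)" using h by simp
  hence "CHAR('r) dvd 2" by (simp only: of_nat_eq_0_iff_char_dvd)
  moreover have "CHAR('r) \<noteq> 1" using assms(2) CHAR_not_1 by (metis One_nat_def)
  moreover have "CHAR('r) \<le> 2" using dvd_imp_le[OF \<open>CHAR('r) dvd 2\<close>] by simp
  moreover have "CHAR('r) \<noteq> 0" proof assume "CHAR('r) = 0" with \<open>CHAR('r) dvd 2\<close> show False by simp qed
  ultimately show False using assms(1) by (cases "CHAR('r)") (auto simp: le_Suc_eq)
qed

lemma gmult_eval:
  fixes f h :: "'g \<Rightarrow> 'r::comm_ring_1"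
  assumes "finite A" "finite B" "gsupp f \<subseteq> A" "gsupp h \<subseteq> B"
  shows "gmult G f h z = (\<Sum>x\<in>A. \<Sum>y\<in>B. if x \<otimes>\<^bsub>G\<^esub> y = z then f x * h y else 0)"
proof -
  have fs: "finite (gsupp f)" "finite (gsupp h)" using assms finite_subset by auto
  have "gmult G f h z = (\<Sum>x\<in>gsupp f. \<Sum>y\<in>gsupp h. if x \<otimes>\<^bsub>G\<^esub> y = z then f x * h y else 0)"
    by (simp add: gmult_def)
  also have "\<dots> = (\<Sum>x\<in>gsupp f. \<Sum>y\<in>B. if x \<otimes>\<^bsub>G\<^esub> y = z then f x * h y else 0)"
    by (intro sum.cong refl sum.mono_neutral_left assms) (auto simp: gsupp_def)
  also have "\<dots> = (\<Sum>x\<in>A. \<Sum>y\<in>B. if x \<otimes>\<^bsub>G\<^esub> y = z then f x * h y else 0)"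
    by (intro sum.mono_neutral_left assms) (auto simp: gsupp_def split: if_splits intro!: sum.neutral)
  finally show ?thesis .
qed




locale setting = group G for G :: "('g,'b) monoid_scheme" (structure) +
  fixes star :: "'g \<Rightarrow> 'g" and \<sigma> :: "'g \<Rightarrow> 'r::comm_ring_1"
  assumes char: "CHAR('r) \<noteq> 2"
    and star_closed[simp]: "x \<in> carrier G \<Longrightarrow> star x \<in> carrier G"
    and star_anti: "x \<in> carrier G \<Longrightarrow> y \<in> carrier G \<Longrightarrow> star (x \<otimes> y) = star y \<otimes> star x"
    and star_invol[simp]: "x \<in> carrier G \<Longrightarrow> star (star x) = x"
    and sigma_hom: "x \<in> carrier G \<Longrightarrow> y \<in> carrier G \<Longrightarrow> \<sigma> (x \<otimes> y) = \<sigma> x * \<sigma> y"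
    and sigma_unit: "x \<in> carrier G \<Longrightarrow> \<sigma> x dvd 1"
    and sigma_nontriv: "\<exists>x\<in>carrier G. \<sigma> x \<noteq> 1"
    and sigma_compat: "x \<in> carrier G \<Longrightarrow> \<sigma> (x \<otimes> star x) = 1"
    and anticomm: "anticommutative G (S_module G star \<sigma>)"
begin

lemma one_ne_zero_r: "(1::'r) \<noteq> 0"
proof
  assume h: "(1::'r) = 0"
  obtain x where "x \<in> carrier G" "\<sigma> x \<noteq> 1" using sigma_nontriv by blast
  moreover have "\<sigma> x = \<sigma> x * 1" by simp
  ultimately show False using h by simp
qed

lemma two_ne: "(2::'r) \<noteq> 0"
  using two_ne_zero_char[OF char one_ne_zero_r] .

lemma unit_cancel: "u dvd (1::'r) \<Longrightarrow> u * a = 0 \<Longrightarrow> a = 0"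
  by (metis dvd_def mult.assoc mult.commute mult_1 mult_zero_right)

lemma unit_ne0: "u dvd (1::'r) \<Longrightarrow> u \<noteq> 0"
  using one_ne_zero_r by auto

lemma two_unit_ne: "u dvd (1::'r) \<Longrightarrow> 2 * u \<noteq> 0"
  using unit_cancel two_ne by (metis mult.commute)

lemma star_one[simp]: "star \<one> = \<one>"
proof -
  have "star \<one> = star (\<one> \<otimes> \<one>)" by simp
  also have "\<dots> = star \<one> \<otimes> star \<one>" by (rule star_anti) auto
  finally show ?thesis by (metis one_closed r_cancel_one star_closed)
qed

lemma star_inv: "x \<in> carrier G \<Longrightarrow> star (inv x) = inv (star x)"
proof -
  assume x: "x \<in> carrier G"
  have "star (x \<otimes> inv x) = star (inv x) \<otimes> star x" by (rule star_anti) (auto simp: x)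
  hence "star (inv x) \<otimes> star x = star (x \<otimes> inv x)" by simp
  also have "\<dots> = \<one>" using x by simp
  finally show ?thesis using x by (metis inv_equality inv_closed star_closed)
qed

lemma sigma_one: "\<sigma> \<one> = 1"
proof -
  have "\<sigma> \<one> = \<sigma> \<one> * \<sigma> \<one>" using sigma_hom[of \<one> \<one>] by simp
  hence "\<sigma> \<one> * (\<sigma> \<one> - 1) = 0" by (simp add: algebra_simps)
  hence "\<sigma> \<one> - 1 = 0" using unit_cancel[OF sigma_unit[OF one_closed]] by blast
  thus ?thesis by simp
qed

lemma sigma_star: "x \<in> carrier G \<Longrightarrow> \<sigma> x * \<sigma> (star x) = 1"
  using sigma_compat sigma_hom by (metis star_closed)

lemma sigma_inv: "x \<in> carrier G \<Longrightarrow> \<sigma> x * \<sigma> (inv x) = 1"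
  using sigma_hom[of x "inv x"] sigma_one by simp

definition gx :: "'g \<Rightarrow> ('g \<Rightarrow> 'r)" where
  "gx x = (\<lambda>z. gdelta x 1 z + gdelta (star x) (\<sigma> x) z)"

lemma rspan_single: "b \<in> A \<Longrightarrow> b \<in> rspan A"
proof -
  assume "b \<in> A"
  hence "(\<lambda>z. (\<lambda>_. 0) z + 1 * b z) \<in> rspan A" by (intro rspan.step rspan.zero)
  thus ?thesis by simp
qed

lemma gx_in_S: "x \<in> carrier G \<Longrightarrow> star x \<noteq> x \<Longrightarrow> gx x \<in> S_module G star \<sigma>"
  unfolding S_module_def gx_def
  by (rule rspan_single) (auto simp: S_gens_def sym_elems_def)

lemma delta2_in_S_ker: "z \<in> carrier G \<Longrightarrow> star z = z \<Longrightarrow> \<sigma> z = 1 \<Longrightarrow> gdelta z 2 \<in> S_module G star \<sigma>"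
  unfolding S_module_def
  by (rule rspan_single) (auto simp: S_gens_def sym_elems_def sigma_kernel_def)

lemma delta2_in_S_nker: assumes "z \<in> carrier G" "star z = z" "\<sigma> z \<noteq> 1" "2 * (1 - \<sigma> z) = 0"
   shows "gdelta z 2 \<in> S_module G star \<sigma>"
proof -
  have "\<exists>x \<alpha>. gdelta z 2 = gdelta x \<alpha> \<and> x \<in> sym_elems G star - sigma_kernel G \<sigma> \<and> \<alpha> * (1 - \<sigma> x) = 0"
    using assms by (intro exI[of _ z] exI[of _ 2]) (auto simp: sym_elems_def sigma_kernel_def)
  hence "gdelta z 2 \<in> S_gens G star \<sigma>" unfolding S_gens_def
    by (intro UnI1 UnI2 CollectI)
  thus ?thesis unfolding S_module_def by (rule rspan_single)
qed

lemma anti_pt: "a \<in> S_module G star \<sigma> \<Longrightarrow> b \<in> S_module G star \<sigma> \<Longrightarrow> gmult G a b z + gmult G b a z = 0"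
  using anticomm unfolding anticommutative_def by metis

lemma gsupp_gx: "gsupp (gx x) \<subseteq> {x, star x}"
  by (auto simp: gsupp_def gx_def gdelta_def)

lemma gsupp_delta: "gsupp (gdelta a \<alpha>) \<subseteq> {a}"
  by (auto simp: gsupp_def gdelta_def)

lemma gx_x: "star x \<noteq> x \<Longrightarrow> gx x x = 1"
  by (auto simp: gx_def gdelta_def)
lemma gx_sx: "star x \<noteq> x \<Longrightarrow> gx x (star x) = \<sigma> x"
  by (auto simp: gx_def gdelta_def)

lemma PP: assumes "star x \<noteq> x" "star y \<noteq> y"
  shows "gmult G (gx x) (gx y) z = (if x \<otimes> y = z then 1 else 0) + (if x \<otimes> star y = z then \<sigma> y else 0)
     + (if star x \<otimes> y = z then \<sigma> x else 0) + (if star x \<otimes> star y = z then \<sigma> x * \<sigma> y else 0)"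
proof -
  have "gmult G (gx x) (gx y) z = (\<Sum>a\<in>{x, star x}. \<Sum>b\<in>{y, star y}. if a \<otimes> b = z then gx x a * gx y b else 0)"
    by (rule gmult_eval) (simp_all add: gsupp_gx)
  also have "\<dots> = (if x \<otimes> y = z then 1 else 0) + (if x \<otimes> star y = z then \<sigma> y else 0)
     + (if star x \<otimes> y = z then \<sigma> x else 0) + (if star x \<otimes> star y = z then \<sigma> x * \<sigma> y else 0)"
    using assms not_sym[OF assms(1)] not_sym[OF assms(2)] by (simp add: gx_x gx_sx)
  finally show ?thesis .
qed

lemma DP: assumes "star y \<noteq> y"
  shows "gmult G (gdelta a \<alpha>) (gx y) z = (if a \<otimes> y = z then \<alpha> else 0) + (if a \<otimes> star y = z then \<alpha> * \<sigma> y else 0)"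
proof -
  have "gmult G (gdelta a \<alpha>) (gx y) z = (\<Sum>u\<in>{a}. \<Sum>b\<in>{y, star y}. if u \<otimes> b = z then gdelta a \<alpha> u * gx y b else 0)"
    by (rule gmult_eval) (simp_all add: gsupp_gx gsupp_delta)
  also have "\<dots> = (if a \<otimes> y = z then \<alpha> else 0) + (if a \<otimes> star y = z then \<alpha> * \<sigma> y else 0)"
    using assms not_sym[OF assms(1)] by (simp add: gx_x gx_sx gdelta_def)
  finally show ?thesis .
qed

lemma PD: assumes "star y \<noteq> y"
  shows "gmult G (gx y) (gdelta a \<alpha>) z = (if y \<otimes> a = z then \<alpha> else 0) + (if star y \<otimes> a = z then \<sigma> y * \<alpha> else 0)"
proof -
  have "gmult G (gx y) (gdelta a \<alpha>) z = (\<Sum>b\<in>{y, star y}. \<Sum>u\<in>{a}. if b \<otimes> u = z then gx y b * gdelta a \<alpha> u else 0)"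
    by (rule gmult_eval) (simp_all add: gsupp_gx gsupp_delta)
  also have "\<dots> = (if y \<otimes> a = z then \<alpha> else 0) + (if star y \<otimes> a = z then \<sigma> y * \<alpha> else 0)"
    using assms not_sym[OF assms(1)] by (simp add: gx_x gx_sx gdelta_def)
  finally show ?thesis .
qed


end



context setting begin

lemma lcan[simp]: "a \<in> carrier G \<Longrightarrow> b \<in> carrier G \<Longrightarrow> c \<in> carrier G \<Longrightarrow> (a \<otimes> b = a \<otimes> c) = (b = c)"
  by (metis Units_eq Units_l_cancel)

lemma invl[simp]: "a \<in> carrier G \<Longrightarrow> b \<in> carrier G \<Longrightarrow> inv a \<otimes> (a \<otimes> b) = b"
  by (simp add: m_assoc[symmetric])
lemma invr[simp]: "a \<in> carrier G \<Longrightarrow> b \<in> carrier G \<Longrightarrow> a \<otimes> (inv a \<otimes> b) = b"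
  by (simp add: m_assoc[symmetric])

lemma two_unit_sum: "u dvd (1::'r) \<Longrightarrow> u + u \<noteq> 0"
proof -
  assume "u dvd 1"
  hence "2 * u \<noteq> 0" by (rule two_unit_ne)
  moreover have "2 * u = u + u" by (rule mult_2)
  ultimately show ?thesis by metis
qed

lemma F0: assumes x: "x \<in> carrier G" "star x \<noteq> x" shows "(2::'r) + 2 = 0"
proof -
  have S1: "gdelta \<one> 2 \<in> S_module G star \<sigma>" by (rule delta2_in_S_ker) (auto simp: sigma_one)
  have "gmult G (gdelta \<one> 2) (gx x) x + gmult G (gx x) (gdelta \<one> 2) x = 0"
    by (rule anti_pt[OF S1 gx_in_S[OF x]])
  thus ?thesis using x by (simp add: DP PD)
qed

lemma F1: assumes x: "x \<in> carrier G" "star x \<noteq> x"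
  shows "x \<otimes> star x = star x \<otimes> x" "x \<otimes> x = star x \<otimes> star x"
proof -
  let ?s = "\<sigma> x"
  have su: "?s dvd 1" using sigma_unit x by simp
  have E: "\<And>z. gmult G (gx x) (gx x) z + gmult G (gx x) (gx x) z = 0"
    by (rule anti_pt[OF gx_in_S[OF x] gx_in_S[OF x]])
  have n1: "star x \<otimes> x \<noteq> x \<otimes> x" "x \<otimes> star x \<noteq> x \<otimes> x"  using x by auto
  show "x \<otimes> x = star x \<otimes> star x"
  proof (rule ccontr)
    assume h: "x \<otimes> x \<noteq> star x \<otimes> star x"
    have "gmult G (gx x) (gx x) (x \<otimes> x) = 1" using x n1 h by (simp add: PP)
    thus False using E[of "x \<otimes> x"] two_ne by simp
  qed
  show "x \<otimes> star x = star x \<otimes> x"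
  proof (rule ccontr)
    assume h: "x \<otimes> star x \<noteq> star x \<otimes> x"
    have "star x \<otimes> star x \<noteq> x \<otimes> star x" using x by auto
    hence "gmult G (gx x) (gx x) (x \<otimes> star x) = ?s" using x n1 h by (simp add: PP)
    thus False using E[of "x \<otimes> star x"] two_unit_sum[OF su] by simp
  qed
qed

lemma XC: assumes x: "x \<in> carrier G" shows "x \<otimes> star x = star x \<otimes> x"
proof (cases "star x = x")
  case True then show ?thesis by simp
next
  case False show ?thesis by (rule F1(1)[OF x False])
qed
lemma XS: assumes x: "x \<in> carrier G" shows "x \<otimes> x = star x \<otimes> star x"
proof (cases "star x = x")
  case True then show ?thesis by simp
next
  case False show ?thesis by (rule F1(2)[OF x False])
qed

definition cc :: "'g \<Rightarrow> 'g" where "cc x = star x \<otimes> inv x"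

lemma cc_closed[simp]: "x \<in> carrier G \<Longrightarrow> cc x \<in> carrier G"
  by (simp add: cc_def)

lemma cc_mul: "x \<in> carrier G \<Longrightarrow> cc x \<otimes> x = star x"
  by (simp add: cc_def m_assoc)

lemma cc_comm: "x \<in> carrier G \<Longrightarrow> x \<otimes> cc x = cc x \<otimes> x"
proof -
  assume x: "x \<in> carrier G"
  have "x \<otimes> cc x = (x \<otimes> star x) \<otimes> inv x" using x by (simp add: cc_def m_assoc)
  also have "\<dots> = (star x \<otimes> x) \<otimes> inv x" using XC[OF x] by simp
  also have "\<dots> = star x" using x by (simp add: m_assoc)
  finally show ?thesis using cc_mul x by simp
qed

lemma cc_mul2: "x \<in> carrier G \<Longrightarrow> x \<otimes> cc x = star x"
  using cc_comm cc_mul by simp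

lemma cc_inv_form: "x \<in> carrier G \<Longrightarrow> cc x = inv x \<otimes> star x"
  by (metis cc_closed cc_mul2 invl star_closed inv_closed)

lemma cc_sq: "x \<in> carrier G \<Longrightarrow> cc x \<otimes> cc x = \<one>"
proof -
  assume x: "x \<in> carrier G"
  have "(cc x \<otimes> cc x) \<otimes> (x \<otimes> x) = cc x \<otimes> ((cc x \<otimes> x) \<otimes> x)" using x by (simp add: m_assoc)
  also have "\<dots> = cc x \<otimes> (star x \<otimes> x)" using x by (simp add: cc_mul)
  also have "\<dots> = cc x \<otimes> (x \<otimes> star x)" using XC[OF x] by simp
  also have "\<dots> = star x \<otimes> star x" using x by (simp add: m_assoc[symmetric] cc_mul)
  also have "\<dots> = x \<otimes> x" using XS[OF x] by simp
  finally show ?thesis using x by simp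
qed

lemma cc_inv: "x \<in> carrier G \<Longrightarrow> inv (cc x) = cc x"
  using cc_sq by (metis cc_closed inv_equality)

lemma cc_star: "x \<in> carrier G \<Longrightarrow> star (cc x) = cc x"
proof -
  assume x: "x \<in> carrier G"
  have "star (cc x) = inv (star x) \<otimes> x" using x by (simp add: cc_def star_anti star_inv)
  also have "\<dots> = inv (cc x)" using x by (simp add: cc_inv_form inv_mult_group)
  finally show ?thesis using x cc_inv by simp
qed

lemma cc_one_iff: "x \<in> carrier G \<Longrightarrow> (cc x = \<one>) = (star x = x)"
  by (metis cc_mul l_one r_cancel_one star_closed cc_closed)


lemma m1_ne_1: "(-1::'r) \<noteq> 1"
proof
  assume h: "(-1::'r) = 1"
  have "(2::'r) = 1 - (-1)" by simp
  also have "\<dots> = 0" using h by simp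
  finally show False using two_ne by simp
qed

end



context setting begin

lemma swap_eq: assumes "a \<in> carrier G" "b \<in> carrier G" "a' \<in> carrier G" "b' \<in> carrier G"
  and "a \<otimes> b = a' \<otimes> b'" shows "inv a \<otimes> a' = b \<otimes> inv b'"
proof -
  have "(inv a \<otimes> a') \<otimes> b' = inv a \<otimes> (a' \<otimes> b')" using assms by (simp add: m_assoc)
  also have "\<dots> = inv a \<otimes> (a \<otimes> b)" by (simp only: assms(5))
  also have "\<dots> = b" using assms(1,2) by simp
  finally show ?thesis using assms(1-4) by (simp add: inv_solve_right)
qed

lemma cc_x_inv_star: "x \<in> carrier G \<Longrightarrow> x \<otimes> inv (star x) = cc x"
  by (metis cc_def cc_inv inv_inv inv_mult_group inv_closed star_closed)

lemma cc_eq_sym: "x \<in> carrier G \<Longrightarrow> y \<in> carrier G \<Longrightarrow> cc y = cc x \<Longrightarrow> cc x = cc y" by simp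

lemma DA1: assumes "x \<in> carrier G" "y \<in> carrier G" "cc x \<noteq> cc y"
  shows "x \<otimes> star y \<noteq> star x \<otimes> y"
proof
  assume "x \<otimes> star y = star x \<otimes> y"
  hence "inv x \<otimes> star x = star y \<otimes> inv y" using assms by (intro swap_eq) auto
  thus False using assms by (simp add: cc_inv_form[symmetric] cc_def)
qed

lemma DA2: assumes "x \<in> carrier G" "y \<in> carrier G" "cc x \<noteq> cc y"
  shows "x \<otimes> y \<noteq> star x \<otimes> star y"
proof
  assume "x \<otimes> y = star x \<otimes> star y"
  hence "inv x \<otimes> star x = y \<otimes> inv (star y)" using assms by (intro swap_eq) auto
  thus False using assms by (simp add: cc_inv_form[symmetric] cc_x_inv_star)
qed

lemma cc_x_eq_star: "x \<in> carrier G \<Longrightarrow> star x = cc x \<otimes> x"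
  by (simp add: cc_mul)

lemma conj_lemma: assumes "c \<in> carrier G" "x \<in> carrier G" "y \<in> carrier G" "c \<otimes> c = \<one>"
  and "y \<otimes> x = c \<otimes> (y \<otimes> (c \<otimes> x))" shows "c \<otimes> y = y \<otimes> c"
proof -
  have "y \<otimes> x = (c \<otimes> y \<otimes> c) \<otimes> x" using assms by (simp add: m_assoc)
  hence h: "y = c \<otimes> y \<otimes> c" using assms by simp
  have "c \<otimes> y = c \<otimes> (c \<otimes> y \<otimes> c)" using h by (rule arg_cong)
  also have "\<dots> = y \<otimes> c" using assms(1,3,4) by (simp add: m_assoc[symmetric])
  finally show ?thesis .
qed

lemma Pair: assumes x: "x \<in> carrier G" "star x \<noteq> x" and y: "y \<in> carrier G" "star y \<noteq> y"
  and cd: "cc x \<noteq> cc y"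
  shows "cc x \<otimes> y = y \<otimes> cc x \<or> (\<sigma> x = -1 \<and> \<sigma> y = 1 \<and> (star (x \<otimes> y) \<noteq> x \<otimes> y \<or> star (y \<otimes> x) \<noteq> y \<otimes> x))"
proof -
  define s where "s = \<sigma> x"
  define t where "t = \<sigma> y"
  have su: "s dvd 1" "t dvd 1" using sigma_unit x y by (auto simp: s_def t_def)
  have stu: "s * t dvd 1" using mult_dvd_mono[OF su] by simp
  define c where "c = cc x"
  define d where "d = cc y"
  have cdc: "c \<in> carrier G" "d \<in> carrier G" using x y by (auto simp: c_def d_def)
  have cd': "c \<noteq> d" using cd by (simp add: c_def d_def)
  have xs: "star x = c \<otimes> x" and ys: "star y = d \<otimes> y" using x y by (auto simp: c_def d_def cc_mul)
  have c2: "c \<otimes> c = \<one>" using x by (simp add: c_def cc_sq)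
  have dA1: "x \<otimes> star y \<noteq> star x \<otimes> y" using DA1 x y cd by blast
  have dA2: "x \<otimes> y \<noteq> star x \<otimes> star y" using DA2 x y cd by blast
  have dB1: "y \<otimes> x \<noteq> star y \<otimes> star x" using DA2 x y cd by metis
  have dB2: "y \<otimes> star x \<noteq> star y \<otimes> x" using DA1 x y cd by metis
  have E1: "gmult G (gx x) (gx y) (x \<otimes> star y) + gmult G (gx y) (gx x) (x \<otimes> star y) = 0"
    by (rule anti_pt[OF gx_in_S[OF x] gx_in_S[OF y]])
  have E2: "gmult G (gx x) (gx y) (star x \<otimes> star y) + gmult G (gx y) (gx x) (star x \<otimes> star y) = 0"
    by (rule anti_pt[OF gx_in_S[OF x] gx_in_S[OF y]])
  have a1: "gmult G (gx x) (gx y) (x \<otimes> star y) = t"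
    using x y dA1 by (simp add: PP t_def)
  have a2: "gmult G (gx x) (gx y) (star x \<otimes> star y) = s * t"
    using x y dA2 by (simp add: PP t_def s_def)
  have b1: "gmult G (gx y) (gx x) (x \<otimes> star y) = (if y \<otimes> x = x \<otimes> star y then 1 else 0)
     + (if y \<otimes> star x = x \<otimes> star y then s else 0) + (if star y \<otimes> x = x \<otimes> star y then t else 0)
     + (if star y \<otimes> star x = x \<otimes> star y then t * s else 0)"
    using x y by (simp add: PP t_def s_def)
  have b2: "gmult G (gx y) (gx x) (star x \<otimes> star y) = (if y \<otimes> x = star x \<otimes> star y then 1 else 0)
     + (if y \<otimes> star x = star x \<otimes> star y then s else 0) + (if star y \<otimes> x = star x \<otimes> star y then t else 0)
     + (if star y \<otimes> star x = star x \<otimes> star y then t * s else 0)"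
    using x y by (simp add: PP t_def s_def)
  have F: "y \<otimes> x \<noteq> y \<otimes> star x" "star y \<otimes> x \<noteq> star y \<otimes> star x" "y \<otimes> x \<noteq> star y \<otimes> x"
    "y \<otimes> star x \<noteq> star y \<otimes> star x"
    using x y by auto
  have F2: "x \<otimes> star y \<noteq> star x \<otimes> star y" using x y by auto
  have e1: "t + gmult G (gx y) (gx x) (x \<otimes> star y) = 0" using E1 a1 by simp
  have e2: "s * t + gmult G (gx y) (gx x) (star x \<otimes> star y) = 0" using E2 a2 by simp
  have tn0: "t \<noteq> 0" "s \<noteq> 0" "s * t \<noteq> 0" using su stu unit_ne0 by auto
  have tt: "t + t \<noteq> 0" "s * t + t * s \<noteq> 0" using two_unit_sum su stu by (auto simp: mult.commute)
  have cx: "c \<otimes> x = star x" "c \<otimes> y = y \<otimes> c \<longleftrightarrow> cc x \<otimes> y = y \<otimes> cc x" using xs by (auto simp: c_def)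
  have coefA: "s = -1" if "t + t * s = 0"
  proof -
    have "t * (s + 1) = 0" using that by (simp add: algebra_simps)
    hence "s + 1 = 0" by (rule unit_cancel[OF su(2)])
    thus ?thesis by (simp add: eq_neg_iff_add_eq_0)
  qed
  have coefB: "s = -1" if "s * t + t = 0"
    using coefA that by (simp add: algebra_simps)
  have nP3: "star y \<otimes> x \<noteq> x \<otimes> star y"
  proof
    assume h: "star y \<otimes> x = x \<otimes> star y"
    have "\<not> (y \<otimes> x = x \<otimes> star y)" "\<not> (y \<otimes> star x = x \<otimes> star y)" "\<not> (star y \<otimes> star x = x \<otimes> star y)"
      using h F dB2 by metis+
    thus False using e1 b1 h tt by simp
  qed
  have nQ4: "star y \<otimes> star x \<noteq> star x \<otimes> star y"
  proof
    assume h: "star y \<otimes> star x = star x \<otimes> star y"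
    have "\<not> (y \<otimes> x = star x \<otimes> star y)" "\<not> (y \<otimes> star x = star x \<otimes> star y)" "\<not> (star y \<otimes> x = star x \<otimes> star y)"
      using h F dB1 by metis+
    thus False using e2 b2 h tt by (simp add: mult.commute)
  qed
  have Pc: "y \<otimes> x = x \<otimes> star y \<or> y \<otimes> star x = x \<otimes> star y \<or> star y \<otimes> star x = x \<otimes> star y"
  proof (rule ccontr)
    assume "\<not> ?thesis"
    thus False using e1 b1 nP3 tn0 by simp
  qed
  have Qc: "y \<otimes> x = star x \<otimes> star y \<or> y \<otimes> star x = star x \<otimes> star y \<or> star y \<otimes> x = star x \<otimes> star y"
  proof (rule ccontr)
    assume "\<not> ?thesis"
    thus False using e2 b2 nQ4 tn0 by simp
  qed
  have cinv: "inv c = c" using c2 cdc by (simp add: inv_equality)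
  have ns: "x \<otimes> star y \<noteq> x \<otimes> y" "star x \<otimes> y \<noteq> x \<otimes> y" "star x \<otimes> star y \<noteq> star x \<otimes> y"
    using x y by auto
  have goalc: "cc x \<otimes> y = y \<otimes> cc x" if "c \<otimes> y = y \<otimes> c" using that by (simp add: c_def)
  have dcF: False if "star y = c \<otimes> y"
  proof -
    have "d \<otimes> y = c \<otimes> y" using that ys by simp
    hence "d = c" using cdc y by simp
    thus False using cd' by simp
  qed
  from Pc show ?thesis
  proof (elim disjE)
    assume P1: "y \<otimes> x = x \<otimes> star y"
    from Qc show ?thesis
    proof (elim disjE)
      assume Q1: "y \<otimes> x = star x \<otimes> star y"
      thus ?thesis using P1 F2 by simp
    next
      assume Q2: "y \<otimes> star x = star x \<otimes> star y"
      have "(y \<otimes> c) \<otimes> x = (c \<otimes> y) \<otimes> x"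
      proof -
        have "(y \<otimes> c) \<otimes> x = y \<otimes> star x" using cdc x y by (simp add: m_assoc xs)
        also have "\<dots> = star x \<otimes> star y" by (rule Q2)
        also have "\<dots> = c \<otimes> (x \<otimes> star y)" using cdc x y by (simp add: m_assoc xs)
        also have "\<dots> = c \<otimes> (y \<otimes> x)" using P1 by simp
        also have "\<dots> = (c \<otimes> y) \<otimes> x" using cdc x y by (simp add: m_assoc)
        finally show ?thesis .
      qed
      hence "c \<otimes> y = y \<otimes> c" using cdc x y by simp
      thus ?thesis using goalc by simp
    next
      assume Q3: "star y \<otimes> x = star x \<otimes> star y"
      have "star y \<otimes> x = (c \<otimes> y) \<otimes> x"
      proof -
        have "star y \<otimes> x = star x \<otimes> star y" by (rule Q3)
        also have "\<dots> = c \<otimes> (x \<otimes> star y)" using cdc x y by (simp add: m_assoc xs)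
        also have "\<dots> = c \<otimes> (y \<otimes> x)" using P1 by simp
        also have "\<dots> = (c \<otimes> y) \<otimes> x" using cdc x y by (simp add: m_assoc)
        finally show ?thesis .
      qed
      hence "star y = c \<otimes> y" using cdc x y by simp
      thus ?thesis using dcF by blast
    qed
  next
    assume P2: "y \<otimes> star x = x \<otimes> star y"
    from Qc show ?thesis
    proof (elim disjE)
      assume Q1: "y \<otimes> x = star x \<otimes> star y"
      have "y \<otimes> x = c \<otimes> (y \<otimes> (c \<otimes> x))"
      proof -
        have "y \<otimes> x = star x \<otimes> star y" by (rule Q1)
        also have "\<dots> = c \<otimes> (x \<otimes> star y)" using cdc x y by (simp add: m_assoc xs)
        also have "\<dots> = c \<otimes> (y \<otimes> star x)" using P2 by simp
        also have "\<dots> = c \<otimes> (y \<otimes> (c \<otimes> x))" by (simp add: xs)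
        finally show ?thesis .
      qed
      hence "c \<otimes> y = y \<otimes> c" using conj_lemma cdc x y c2 by blast
      thus ?thesis using goalc by simp
    next
      assume Q2: "y \<otimes> star x = star x \<otimes> star y"
      thus ?thesis using P2 F2 by simp
    next
      assume Q3: "star y \<otimes> x = star x \<otimes> star y"
      have "\<not> (y \<otimes> x = x \<otimes> star y)" "\<not> (star y \<otimes> star x = x \<otimes> star y)"
        using P2 F by metis+
      hence ts: "t + s = 0" using e1 b1 P2 nP3 by simp
      have "\<not> (y \<otimes> x = star x \<otimes> star y)" "\<not> (y \<otimes> star x = star x \<otimes> star y)"
        using Q3 F dB2 by metis+
      hence "s * t + t = 0" using e2 b2 Q3 nQ4 by simp
      hence sm: "s = -1" by (rule coefB)
      hence tp: "t = 1" using ts by (simp add: add_eq_0_iff)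
      have "star (y \<otimes> x) = star y \<otimes> x" using x y Q3 by (simp add: star_anti)
      hence "star (y \<otimes> x) \<noteq> y \<otimes> x" using F by simp
      thus ?thesis using sm tp by (simp add: s_def t_def)
    qed
  next
    assume P4: "star y \<otimes> star x = x \<otimes> star y"
    have "\<not> (y \<otimes> x = x \<otimes> star y)" "\<not> (y \<otimes> star x = x \<otimes> star y)"
      using P4 F dB1 by metis+
    hence "t + t * s = 0" using e1 b1 P4 nP3 by simp
    hence sm: "s = -1" by (rule coefA)
    from Qc show ?thesis
    proof (elim disjE)
      assume Q1: "y \<otimes> x = star x \<otimes> star y"
      have "\<not> (y \<otimes> star x = star x \<otimes> star y)" "\<not> (star y \<otimes> x = star x \<otimes> star y)"
        using Q1 F by metis+
      hence "s * t + 1 = 0" using e2 b2 Q1 nQ4 by simp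
      hence tp: "t = 1" using sm by (simp add: add_eq_0_iff)
      have "star (x \<otimes> y) = x \<otimes> star y" using x y P4 by (simp add: star_anti)
      hence "star (x \<otimes> y) \<noteq> x \<otimes> y" using ns by simp
      thus ?thesis using sm tp by (simp add: s_def t_def)
    next
      assume Q2: "y \<otimes> star x = star x \<otimes> star y"
      have "y \<otimes> star x = (c \<otimes> star y) \<otimes> star x"
      proof -
        have "y \<otimes> star x = star x \<otimes> star y" by (rule Q2)
        also have "\<dots> = c \<otimes> (x \<otimes> star y)" using cdc x y by (simp add: m_assoc xs)
        also have "\<dots> = c \<otimes> (star y \<otimes> star x)" using P4 by simp
        also have "\<dots> = (c \<otimes> star y) \<otimes> star x" using cdc x y by (simp add: m_assoc)
        finally show ?thesis .
      qed
      hence "y = c \<otimes> star y" using cdc x y by simp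
      hence "y = (c \<otimes> d) \<otimes> y" using cdc y ys by (simp add: m_assoc)
      hence "c \<otimes> d = \<one>" using cdc y by (metis m_closed r_cancel_one')
      hence "inv c = d" using cdc by (metis inv_equality inv_comm)
      thus ?thesis using cinv cd' by simp
    next
      assume Q3: "star y \<otimes> x = star x \<otimes> star y"
      have E3: "gmult G (gx x) (gx y) (x \<otimes> y) + gmult G (gx y) (gx x) (x \<otimes> y) = 0"
        by (rule anti_pt[OF gx_in_S[OF x] gx_in_S[OF y]])
      have E4: "gmult G (gx x) (gx y) (star x \<otimes> y) + gmult G (gx y) (gx x) (star x \<otimes> y) = 0"
        by (rule anti_pt[OF gx_in_S[OF x] gx_in_S[OF y]])
      have a3: "gmult G (gx x) (gx y) (x \<otimes> y) = 1"
        using x y dA2 ns by (simp add: PP)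
      have a4: "gmult G (gx x) (gx y) (star x \<otimes> y) = s"
        using x y dA1 ns by (simp add: PP s_def)
      have b3: "gmult G (gx y) (gx x) (x \<otimes> y) = (if y \<otimes> x = x \<otimes> y then 1 else 0)
         + (if y \<otimes> star x = x \<otimes> y then s else 0) + (if star y \<otimes> x = x \<otimes> y then t else 0)
         + (if star y \<otimes> star x = x \<otimes> y then t * s else 0)"
        using x y by (simp add: PP t_def s_def)
      have b4: "gmult G (gx y) (gx x) (star x \<otimes> y) = (if y \<otimes> x = star x \<otimes> y then 1 else 0)
         + (if y \<otimes> star x = star x \<otimes> y then s else 0) + (if star y \<otimes> x = star x \<otimes> y then t else 0)
         + (if star y \<otimes> star x = star x \<otimes> y then t * s else 0)"
        using x y by (simp add: PP t_def s_def)
      have f3: "star y \<otimes> star x \<noteq> x \<otimes> y" "star y \<otimes> x \<noteq> x \<otimes> y"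
        using P4 Q3 ns dA2 by auto
      have R3: "y \<otimes> star x = x \<otimes> y"
      proof (rule ccontr)
        assume h: "y \<otimes> star x \<noteq> x \<otimes> y"
        have "1 + (if y \<otimes> x = x \<otimes> y then 1 else 0) = (0::'r)" using E3 a3 b3 h f3 by simp
        thus False using two_ne one_ne_zero_r by (cases "y \<otimes> x = x \<otimes> y") auto
      qed
      have f4: "y \<otimes> star x \<noteq> star x \<otimes> y" "star y \<otimes> x \<noteq> star x \<otimes> y" "star y \<otimes> star x \<noteq> star x \<otimes> y"
        using R3 Q3 P4 ns dA1 x y by auto
      have R4: "y \<otimes> x = star x \<otimes> y"
      proof (rule ccontr)
        assume h: "y \<otimes> x \<noteq> star x \<otimes> y"
        have "s = 0" using E4 a4 b4 h f4 by simp
        thus False using tn0 by simp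
      qed
      have "y \<otimes> x = c \<otimes> (y \<otimes> (c \<otimes> x))"
      proof -
        have "y \<otimes> x = star x \<otimes> y" by (rule R4)
        also have "\<dots> = c \<otimes> (x \<otimes> y)" using cdc x y by (simp add: m_assoc xs)
        also have "\<dots> = c \<otimes> (y \<otimes> star x)" using R3 by simp
        also have "\<dots> = c \<otimes> (y \<otimes> (c \<otimes> x))" by (simp add: xs)
        finally show ?thesis .
      qed
      hence "c \<otimes> y = y \<otimes> c" using conj_lemma cdc x y c2 by blast
      thus ?thesis using goalc by simp
    qed
  qed
qed

end



context setting begin

lemma P1': assumes x: "x \<in> carrier G" "star x \<noteq> x" and y: "y \<in> carrier G" "star y \<noteq> y"
  and sy: "\<sigma> y \<noteq> 1" shows "cc x \<otimes> y = y \<otimes> cc x"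
proof (cases "cc x = cc y")
  case True thus ?thesis using y cc_comm by simp
next
  case False thus ?thesis using Pair[OF x y False] sy by blast
qed

lemma P2': assumes x: "x \<in> carrier G" "star x \<noteq> x" and y: "y \<in> carrier G" "star y \<noteq> y"
  shows "cc x \<otimes> y = y \<otimes> cc x"
proof (cases "cc x = cc y")
  case True thus ?thesis using y cc_comm by simp
next
  case False
  note P = Pair[OF x y False]
  show ?thesis
  proof (cases "cc x \<otimes> y = y \<otimes> cc x")
    case True thus ?thesis .
  next
    case nc: False
    with P have sx: "\<sigma> x = -1" and sy: "\<sigma> y = 1" and w: "star (x \<otimes> y) \<noteq> x \<otimes> y \<or> star (y \<otimes> x) \<noteq> y \<otimes> x"
      by auto
    have c: "cc x \<in> carrier G" "x \<otimes> cc x = cc x \<otimes> x" using x cc_comm by auto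
    from w show ?thesis
    proof
      assume w1: "star (x \<otimes> y) \<noteq> x \<otimes> y"
      have "\<sigma> (x \<otimes> y) = -1" using x y sx sy by (simp add: sigma_hom)
      hence "\<sigma> (x \<otimes> y) \<noteq> 1" using m1_ne_1 by simp
      hence h: "cc x \<otimes> (x \<otimes> y) = (x \<otimes> y) \<otimes> cc x" using P1'[OF x _ w1] x y by simp
      have "x \<otimes> (cc x \<otimes> y) = x \<otimes> (y \<otimes> cc x)"
        using h c x y by (simp add: m_assoc[symmetric])
      thus ?thesis using c x y by simp
    next
      assume w1: "star (y \<otimes> x) \<noteq> y \<otimes> x"
      have "\<sigma> (y \<otimes> x) = -1" using x y sx sy by (simp add: sigma_hom)
      hence "\<sigma> (y \<otimes> x) \<noteq> 1" using m1_ne_1 by simp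
      hence h: "cc x \<otimes> (y \<otimes> x) = (y \<otimes> x) \<otimes> cc x" using P1'[OF x _ w1] x y by simp
      have "(cc x \<otimes> y) \<otimes> x = (y \<otimes> cc x) \<otimes> x"
        using h c x y by (simp add: m_assoc)
      thus ?thesis using c x y by simp
    qed
  qed
qed

lemma Central: assumes x: "x \<in> carrier G" "star x \<noteq> x" and y: "y \<in> carrier G"
  shows "cc x \<otimes> y = y \<otimes> cc x"
proof -
  have c: "cc x \<in> carrier G" "x \<otimes> cc x = cc x \<otimes> x" using x cc_comm by auto
  show ?thesis
  proof (cases "star y = y")
    case False thus ?thesis using P2'[OF x] y by blast
  next
    case sy: True
    show ?thesis
    proof (cases "star (y \<otimes> x) = y \<otimes> x")
      case False
      hence h: "cc x \<otimes> (y \<otimes> x) = (y \<otimes> x) \<otimes> cc x" using P2'[OF x] x y by simp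
      have "(cc x \<otimes> y) \<otimes> x = (y \<otimes> cc x) \<otimes> x"
        using h c x y by (simp add: m_assoc)
      thus ?thesis using c x y by simp
    next
      case yx: True
      show ?thesis
      proof (cases "star (x \<otimes> y) = x \<otimes> y")
        case False
        hence h: "cc x \<otimes> (x \<otimes> y) = (x \<otimes> y) \<otimes> cc x" using P2'[OF x] x y by simp
        have "x \<otimes> (cc x \<otimes> y) = x \<otimes> (y \<otimes> cc x)"
          using h c x y by (simp add: m_assoc[symmetric])
        thus ?thesis using c x y by simp
      next
        case xy: True
        have e1: "star x \<otimes> y = y \<otimes> x" using yx x y sy by (simp add: star_anti)
        have e2: "y \<otimes> star x = x \<otimes> y" using xy x y sy by (simp add: star_anti)
        have "(cc x \<otimes> y) \<otimes> x = cc x \<otimes> (star x \<otimes> y)" using e1 c x y by (simp add: m_assoc)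
        also have "\<dots> = (cc x \<otimes> cc x) \<otimes> (x \<otimes> y)" using c x y by (simp add: m_assoc cc_mul[symmetric])
        also have "\<dots> = x \<otimes> y" using x y by (simp add: cc_sq)
        also have "\<dots> = y \<otimes> star x" using e2 by simp
        also have "\<dots> = (y \<otimes> cc x) \<otimes> x" using c x y by (simp add: m_assoc cc_mul[symmetric])
        finally show ?thesis using c x y by simp
      qed
    qed
  qed
qed

lemma cc_central: "x \<in> carrier G \<Longrightarrow> y \<in> carrier G \<Longrightarrow> cc x \<otimes> y = y \<otimes> cc x"
proof (cases "star x = x")
  case True
  assume "x \<in> carrier G" "y \<in> carrier G"
  hence "cc x = \<one>" using True cc_one_iff by simp
  thus ?thesis using \<open>y \<in> carrier G\<close> by simp
next
  case False
  assume "x \<in> carrier G" "y \<in> carrier G"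
  thus ?thesis using Central False by blast
qed

end



context setting begin

definition ctr :: "'g \<Rightarrow> bool" where "ctr z \<longleftrightarrow> z \<in> carrier G \<and> (\<forall>y\<in>carrier G. z \<otimes> y = y \<otimes> z)"

lemma ctr_cc: "x \<in> carrier G \<Longrightarrow> ctr (cc x)"
  using cc_central by (simp add: ctr_def)

lemma ctr_mult_inv: assumes "ctr a" "ctr b" "a \<otimes> a = \<one>" "b \<otimes> b = \<one>"
  shows "ctr (a \<otimes> b)" "(a \<otimes> b) \<otimes> (a \<otimes> b) = \<one>"
proof -
  have a: "a \<in> carrier G" "\<And>y. y \<in> carrier G \<Longrightarrow> a \<otimes> y = y \<otimes> a" using assms(1) unfolding ctr_def by blast+
  have b: "b \<in> carrier G" "\<And>y. y \<in> carrier G \<Longrightarrow> b \<otimes> y = y \<otimes> b" using assms(2) unfolding ctr_def by blast+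
  show "ctr (a \<otimes> b)" unfolding ctr_def
  proof (intro conjI ballI)
    show "a \<otimes> b \<in> carrier G" using a(1) b(1) by simp
    fix y assume y: "y \<in> carrier G"
    have "a \<otimes> b \<otimes> y = a \<otimes> (y \<otimes> b)" using a(1) b(1) y b(2)[OF y] by (simp add: m_assoc)
    also have "\<dots> = y \<otimes> (a \<otimes> b)" using a(1) b(1) y a(2)[of y] by (simp add: m_assoc[symmetric])
    finally show "a \<otimes> b \<otimes> y = y \<otimes> (a \<otimes> b)" .
  qed
  have "(a \<otimes> b) \<otimes> (a \<otimes> b) = a \<otimes> ((b \<otimes> a) \<otimes> b)" using a(1) b(1) by (simp add: m_assoc)
  also have "\<dots> = a \<otimes> ((a \<otimes> b) \<otimes> b)" using a(1) b(1) b(2)[OF a(1)] by simp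
  also have "\<dots> = (a \<otimes> a) \<otimes> (b \<otimes> b)" using a(1) b(1) by (simp add: m_assoc)
  finally show "(a \<otimes> b) \<otimes> (a \<otimes> b) = \<one>" using assms(3,4) by simp
qed

lemma gcomm_one_iff: "a \<in> carrier G \<Longrightarrow> b \<in> carrier G \<Longrightarrow> (gcomm G a b = \<one>) = (a \<otimes> b = b \<otimes> a)"
proof -
  assume a: "a \<in> carrier G" and b: "b \<in> carrier G"
  have "gcomm G a b = inv (b \<otimes> a) \<otimes> (a \<otimes> b)" using a b by (simp add: gcomm_def inv_mult_group m_assoc)
  also have "(\<dots> = \<one>) = (a \<otimes> b = b \<otimes> a)"
    using a b by (metis inv_closed inv_equality inv_inv m_closed r_inv inv_comm)
  finally show ?thesis .
qed

lemma gcomm_closed: "a \<in> carrier G \<Longrightarrow> b \<in> carrier G \<Longrightarrow> gcomm G a b \<in> carrier G"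
  by (simp add: gcomm_def)

lemma gcomm_eq: "a \<in> carrier G \<Longrightarrow> b \<in> carrier G \<Longrightarrow> (b \<otimes> a) \<otimes> gcomm G a b = a \<otimes> b"
  by (simp add: gcomm_def m_assoc)

lemma T2: assumes x: "x \<in> carrier G" and y: "y \<in> carrier G"
  shows "cc (x \<otimes> y) = cc x \<otimes> cc y \<otimes> gcomm G x y"
proof -
  define c d e k where "c = cc x" "d = cc y" "e = cc (x \<otimes> y)" "k = gcomm G x y"
  have car: "c \<in> carrier G" "d \<in> carrier G" "e \<in> carrier G" "k \<in> carrier G"
    using x y by (auto simp: c_d_e_k_def gcomm_closed)
  have cen: "ctr c" "ctr d" "ctr e" using x y ctr_cc by (auto simp: c_d_e_k_def)
  have inv2: "c \<otimes> c = \<one>" "d \<otimes> d = \<one>" "e \<otimes> e = \<one>" using x y cc_sq by (auto simp: c_d_e_k_def)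
  have cc': "\<And>z. z \<in> carrier G \<Longrightarrow> c \<otimes> z = z \<otimes> c" using cen by (auto simp: ctr_def)
  have ce': "\<And>z. z \<in> carrier G \<Longrightarrow> e \<otimes> z = z \<otimes> e" using cen by (auto simp: ctr_def)
  have kk: "(y \<otimes> x) \<otimes> k = x \<otimes> y" using x y gcomm_eq by (simp add: c_d_e_k_def)
  have A: "e \<otimes> (x \<otimes> y) = (c \<otimes> d) \<otimes> (y \<otimes> x)"
  proof -
    have "e \<otimes> (x \<otimes> y) = star (x \<otimes> y)" using x y by (simp add: c_d_e_k_def cc_mul)
    also have "\<dots> = (d \<otimes> y) \<otimes> (c \<otimes> x)" using x y by (simp add: star_anti c_d_e_k_def cc_mul)
    also have "\<dots> = d \<otimes> ((y \<otimes> c) \<otimes> x)" using x y car by (simp add: m_assoc)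
    also have "\<dots> = d \<otimes> ((c \<otimes> y) \<otimes> x)" using cc'[OF y] by simp
    also have "\<dots> = (d \<otimes> c) \<otimes> (y \<otimes> x)" using x y car by (simp add: m_assoc)
    also have "\<dots> = (c \<otimes> d) \<otimes> (y \<otimes> x)" using cc'[OF car(2)] by simp
    finally show ?thesis .
  qed
  have "(y \<otimes> x) \<otimes> (e \<otimes> k) = (y \<otimes> x) \<otimes> (c \<otimes> d)"
  proof -
    have "(y \<otimes> x) \<otimes> (e \<otimes> k) = e \<otimes> ((y \<otimes> x) \<otimes> k)" using x y car ce'[of "y \<otimes> x"] by (simp add: m_assoc[symmetric])
    also have "\<dots> = (c \<otimes> d) \<otimes> (y \<otimes> x)" using kk A by simp
    also have "\<dots> = (y \<otimes> x) \<otimes> (c \<otimes> d)" using ctr_mult_inv(1)[OF cen(1,2) inv2(1,2)] x y unfolding ctr_def by (meson m_closed)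
    finally show ?thesis .
  qed
  hence ek: "e \<otimes> k = c \<otimes> d" using x y car by simp
  have kdef: "k = e \<otimes> (c \<otimes> d)"
  proof -
    have "k = (e \<otimes> e) \<otimes> k" using car inv2 by simp
    also have "\<dots> = e \<otimes> (c \<otimes> d)" using car ek by (simp add: m_assoc)
    finally show ?thesis .
  qed
  have cdc: "ctr (c \<otimes> d)" "(c \<otimes> d) \<otimes> (c \<otimes> d) = \<one>" using ctr_mult_inv[OF cen(1,2) inv2(1,2)] by auto
  have kc: "ctr k" "k \<otimes> k = \<one>" using ctr_mult_inv[OF cen(3) cdc(1) inv2(3) cdc(2)] kdef by auto
  have "e \<otimes> (x \<otimes> y) = (c \<otimes> d \<otimes> k) \<otimes> (x \<otimes> y)"
  proof -
    have "(c \<otimes> d \<otimes> k) \<otimes> (x \<otimes> y) = (c \<otimes> d) \<otimes> (k \<otimes> ((y \<otimes> x) \<otimes> k))" using kk car x y by (simp add: m_assoc)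
    also have "\<dots> = (c \<otimes> d) \<otimes> ((k \<otimes> (y \<otimes> x)) \<otimes> k)" using car x y by (simp add: m_assoc)
    also have "\<dots> = (c \<otimes> d) \<otimes> (((y \<otimes> x) \<otimes> k) \<otimes> k)" using kc(1) x y unfolding ctr_def by (metis m_closed)
    also have "\<dots> = (c \<otimes> d) \<otimes> ((y \<otimes> x) \<otimes> (k \<otimes> k))" using car x y by (simp add: m_assoc)
    also have "\<dots> = (c \<otimes> d) \<otimes> (y \<otimes> x)" using kc(2) x y by simp
    finally show ?thesis using A by simp
  qed
  hence "e = c \<otimes> d \<otimes> k" using car x y by simp
  thus ?thesis by (simp add: c_d_e_k_def)
qed

end



context setting begin

lemma ctr_comm: "ctr a \<Longrightarrow> y \<in> carrier G \<Longrightarrow> a \<otimes> y = y \<otimes> a"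
  unfolding ctr_def by blast

lemma T3ns: assumes x: "x \<in> carrier G" "star x \<noteq> x" and y: "y \<in> carrier G" "star y \<noteq> y"
  and k1: "gcomm G x y \<noteq> \<one>"
  shows "cc (x \<otimes> y) \<in> {cc x, cc y, gcomm G x y}"
proof -
  define c d k where "c = cc x" "d = cc y" "k = gcomm G x y"
  have car: "c \<in> carrier G" "d \<in> carrier G" "k \<in> carrier G"
    using x y by (auto simp: c_d_k_def gcomm_closed)
  have cen: "ctr c" "ctr d" "ctr (cc (x \<otimes> y))" using x y ctr_cc by (auto simp: c_d_k_def)
  have inv2: "c \<otimes> c = \<one>" "d \<otimes> d = \<one>" "cc (x \<otimes> y) \<otimes> cc (x \<otimes> y) = \<one>" using x y cc_sq by (auto simp: c_d_k_def)
  have e: "cc (x \<otimes> y) = c \<otimes> d \<otimes> k" using T2 x y by (simp add: c_d_k_def)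
  have cdc: "ctr (c \<otimes> d)" "(c \<otimes> d) \<otimes> (c \<otimes> d) = \<one>" using ctr_mult_inv[OF cen(1,2) inv2(1,2)] by auto
  have kdef: "k = (c \<otimes> d) \<otimes> cc (x \<otimes> y)"
  proof -
    have "(c \<otimes> d) \<otimes> cc (x \<otimes> y) = ((c \<otimes> d) \<otimes> (c \<otimes> d)) \<otimes> k" using e car by (simp add: m_assoc)
    thus ?thesis using cdc car by simp
  qed
  have kc: "ctr k" "k \<otimes> k = \<one>" using ctr_mult_inv[OF cdc(1) cen(3) cdc(2) inv2(3)] kdef by auto
  have yxk: "(y \<otimes> x) \<otimes> k = x \<otimes> y" using gcomm_eq x y by (simp add: c_d_k_def)
  have nyx: "y \<otimes> x \<noteq> x \<otimes> y" using k1 gcomm_one_iff x y by metis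
  have xs: "star x = c \<otimes> x" and ys: "star y = d \<otimes> y" using x y by (auto simp: c_d_k_def cc_mul)
  show ?thesis
  proof (cases "c = d")
    case True
    hence "cc (x \<otimes> y) = k" using e inv2 car by simp
    thus ?thesis by (simp add: c_d_k_def)
  next
    case cd: False
    hence cd': "cc x \<noteq> cc y" by (simp add: c_d_k_def)
    define s t where "s = \<sigma> x" "t = \<sigma> y"
    have E3: "gmult G (gx x) (gx y) (x \<otimes> y) + gmult G (gx y) (gx x) (x \<otimes> y) = 0"
      by (rule anti_pt[OF gx_in_S[OF x] gx_in_S[OF y]])
    have a3: "gmult G (gx x) (gx y) (x \<otimes> y) = 1"
      using x y DA2[OF x(1) y(1) cd'] by (simp add: PP)
    have b3: "gmult G (gx y) (gx x) (x \<otimes> y) = (if y \<otimes> x = x \<otimes> y then 1 else 0)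
         + (if y \<otimes> star x = x \<otimes> y then s else 0) + (if star y \<otimes> x = x \<otimes> y then t else 0)
         + (if star y \<otimes> star x = x \<otimes> y then t * s else 0)"
      using x y by (simp add: PP s_t_def)
    have Rc: "y \<otimes> star x = x \<otimes> y \<or> star y \<otimes> x = x \<otimes> y \<or> star y \<otimes> star x = x \<otimes> y"
    proof (rule ccontr)
      assume "\<not> ?thesis"
      hence "(1::'r) = 0" using E3 a3 b3 nyx by simp
      thus False using one_ne_zero_r by simp
    qed
    from Rc show ?thesis
    proof (elim disjE)
      assume R2: "y \<otimes> star x = x \<otimes> y"
      have "(y \<otimes> x) \<otimes> c = (y \<otimes> x) \<otimes> k"
      proof -
        have "(y \<otimes> x) \<otimes> c = y \<otimes> (c \<otimes> x)" using car x y ctr_comm[OF cen(1) x(1)] by (simp add: m_assoc)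
        also have "\<dots> = x \<otimes> y" using R2 xs by simp
        finally show ?thesis using yxk by simp
      qed
      hence "k = c" using car x y by simp
      hence "cc (x \<otimes> y) = d"
        using e car inv2 ctr_comm[OF cen(1) car(2)] by (simp add: m_assoc)
      thus ?thesis by (simp add: c_d_k_def)
    next
      assume R3: "star y \<otimes> x = x \<otimes> y"
      have "(y \<otimes> x) \<otimes> d = (y \<otimes> x) \<otimes> k"
      proof -
        have "(y \<otimes> x) \<otimes> d = d \<otimes> (y \<otimes> x)" using car x y ctr_comm[OF cen(2)] by simp
        also have "\<dots> = star y \<otimes> x" using car x y ys by (simp add: m_assoc)
        also have "\<dots> = x \<otimes> y" by (rule R3)
        finally show ?thesis using yxk by simp
      qed
      hence "k = d" using car x y by simp
      hence "cc (x \<otimes> y) = c" using e car inv2 by (simp add: m_assoc)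
      thus ?thesis by (simp add: c_d_k_def)
    next
      assume R4: "star y \<otimes> star x = x \<otimes> y"
      have hcy: "c \<otimes> (y \<otimes> x) = y \<otimes> (c \<otimes> x)"
        using car x y ctr_comm[OF cen(1) y(1)] by (simp add: m_assoc[symmetric])
      have "(y \<otimes> x) \<otimes> (c \<otimes> d) = (y \<otimes> x) \<otimes> k"
      proof -
        have "(y \<otimes> x) \<otimes> (c \<otimes> d) = (c \<otimes> d) \<otimes> (y \<otimes> x)" using car x y ctr_comm[OF cdc(1)] by simp
        also have "\<dots> = d \<otimes> (c \<otimes> (y \<otimes> x))"
          using car x y ctr_comm[OF cen(1) car(2)] by (simp add: m_assoc[symmetric])
        also have "\<dots> = d \<otimes> (y \<otimes> (c \<otimes> x))" using hcy by simp
        also have "\<dots> = star y \<otimes> star x" using car x y xs ys by (simp add: m_assoc)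
        also have "\<dots> = x \<otimes> y" by (rule R4)
        finally show ?thesis using yxk by simp
      qed
      hence kcd: "k = c \<otimes> d" using car x y by simp
      hence "cc (x \<otimes> y) = \<one>" using e cdc car by (simp add: m_assoc)
      hence zs: "star (x \<otimes> y) = x \<otimes> y" using cc_one_iff x y by simp
      have f: "y \<otimes> star x \<noteq> star y \<otimes> star x" "star y \<otimes> x \<noteq> star y \<otimes> star x" using x y by auto
      have "\<not> (y \<otimes> star x = x \<otimes> y)" "\<not> (star y \<otimes> x = x \<otimes> y)"
        using R4 f by metis+
      hence "1 + t * s = 0" using E3 a3 b3 nyx R4 by simp
      hence sz: "\<sigma> (x \<otimes> y) = -1" using x y sigma_hom by (simp add: s_t_def mult.commute eq_neg_iff_add_eq_0 add.commute)
      have S: "gdelta (x \<otimes> y) 2 \<in> S_module G star \<sigma>"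
      proof (rule delta2_in_S_nker)
        show "\<sigma> (x \<otimes> y) \<noteq> 1" using sz m1_ne_1 by simp
        show "2 * (1 - \<sigma> (x \<otimes> y)) = 0" using sz F0[OF x] by simp
      qed (use x y zs in auto)
      let ?z = "x \<otimes> y"
      have E: "gmult G (gdelta ?z 2) (gx x) (?z \<otimes> x) + gmult G (gx x) (gdelta ?z 2) (?z \<otimes> x) = 0"
        by (rule anti_pt[OF S gx_in_S[OF x]])
      have alt: "x \<otimes> ?z = ?z \<otimes> x \<or> star x \<otimes> ?z = ?z \<otimes> x"
      proof (rule ccontr)
        assume h: "\<not> ?thesis"
        have "?z \<otimes> star x \<noteq> ?z \<otimes> x" using x y by simp
        hence "(2::'r) = 0" using E h x by (simp add: DP PD)
        thus False using two_ne by simp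
      qed
      thus ?thesis
      proof
        assume "x \<otimes> ?z = ?z \<otimes> x"
        hence "x \<otimes> (x \<otimes> y) = x \<otimes> (y \<otimes> x)" using x y by (simp add: m_assoc)
        hence "x \<otimes> y = y \<otimes> x" using x y by simp
        thus ?thesis using nyx by simp
      next
        assume h: "star x \<otimes> ?z = ?z \<otimes> x"
        have "x \<otimes> (c \<otimes> (x \<otimes> y)) = x \<otimes> (y \<otimes> x)"
        proof -
          have "x \<otimes> (c \<otimes> (x \<otimes> y)) = (c \<otimes> x) \<otimes> (x \<otimes> y)"
            using car x y ctr_comm[OF cen(1) x(1)] by (simp add: m_assoc)
          also have "\<dots> = ?z \<otimes> x" using h xs by simp
          finally show ?thesis using x y by (simp add: m_assoc)
        qed
        hence hc: "c \<otimes> (x \<otimes> y) = y \<otimes> x" using car x y by simp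
        have "(y \<otimes> x) \<otimes> (c \<otimes> k) = ((y \<otimes> x) \<otimes> c) \<otimes> k" using car x y by (simp add: m_assoc)
        also have "\<dots> = (c \<otimes> (y \<otimes> x)) \<otimes> k" using ctr_comm[OF cen(1), of "y \<otimes> x"] x y by simp
        also have "\<dots> = c \<otimes> ((y \<otimes> x) \<otimes> k)" using car x y by (simp add: m_assoc)
        also have "\<dots> = c \<otimes> (x \<otimes> y)" using yxk by simp
        also have "\<dots> = (y \<otimes> x) \<otimes> \<one>" using hc x y by simp
        finally have "(y \<otimes> x) \<otimes> (c \<otimes> k) = (y \<otimes> x) \<otimes> \<one>" .
        hence "c \<otimes> k = \<one>" using car x y by (metis m_closed lcan one_closed)
        hence "(c \<otimes> c) \<otimes> d = \<one>" using kcd car by (simp add: m_assoc)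
        hence "d = \<one>" using inv2 car by simp
        hence "star y = y" using cc_one_iff y by (simp add: c_d_k_def)
        thus ?thesis using y by simp
      qed
    qed
  qed
qed

end



context setting begin

lemma ns_inv: "y \<in> carrier G \<Longrightarrow> star y \<noteq> y \<Longrightarrow> star (inv y) \<noteq> inv y"
  by (metis star_inv inv_inv star_closed)

lemma T3gen: assumes x: "x \<in> carrier G" and y: "y \<in> carrier G" and k1: "gcomm G x y \<noteq> \<one>"
  shows "cc (x \<otimes> y) \<in> {cc x, cc y, gcomm G x y}"
proof -
  have nxy: "x \<otimes> y \<noteq> y \<otimes> x" using k1 gcomm_one_iff x y by metis
  show ?thesis
  proof (cases "star x = x")
    case sx: True
    show ?thesis
    proof (cases "star y = y")
      case sy: True
      have "cc x = \<one>" "cc y = \<one>" using sx sy cc_one_iff x y by simp_all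
      hence "cc (x \<otimes> y) = gcomm G x y" using T2[OF x y] x y gcomm_closed by simp
      thus ?thesis by simp
    next
      case sy: False
      show ?thesis
      proof (cases "star (x \<otimes> y) = x \<otimes> y")
        case True
        hence "cc (x \<otimes> y) = \<one>" using cc_one_iff[of "x \<otimes> y"] x y by simp
        moreover have "cc x = \<one>" using cc_one_iff[OF x] sx by simp
        ultimately have "cc (x \<otimes> y) = cc x" by simp
        thus ?thesis by simp
      next
        case w: False
        let ?w = "x \<otimes> y"
        have wi: "?w \<otimes> inv y = x" using x y by (simp add: m_assoc)
        have g: "gcomm G ?w (inv y) \<noteq> \<one>"
        proof
          assume "gcomm G ?w (inv y) = \<one>"
          hence "?w \<otimes> inv y = inv y \<otimes> ?w" using gcomm_one_iff x y by simp
          hence "x = inv y \<otimes> (x \<otimes> y)" using wi by simp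
          hence "y \<otimes> x = x \<otimes> y" using x y by (simp add: inv_solve_left)
          thus False using nxy by simp
        qed
        have "cc x \<in> {cc ?w, cc (inv y), gcomm G ?w (inv y)}"
          using T3ns[OF _ w _ ns_inv[OF y sy] g] x y wi by simp
        moreover have "cc x = \<one>" using cc_one_iff x sx by simp
        moreover have "cc ?w \<noteq> \<one>" "cc (inv y) \<noteq> \<one>" using cc_one_iff x y w ns_inv[OF y sy] by simp_all
        ultimately show ?thesis using g by auto
      qed
    qed
  next
    case sx: False
    show ?thesis
    proof (cases "star y = y")
      case sy: False
      show ?thesis using T3ns[OF x sx y sy k1] .
    next
      case sy: True
      show ?thesis
      proof (cases "star (x \<otimes> y) = x \<otimes> y")
        case True
        hence "cc (x \<otimes> y) = \<one>" using cc_one_iff[of "x \<otimes> y"] x y by simp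
        moreover have "cc y = \<one>" using cc_one_iff[OF y] sy by simp
        ultimately have "cc (x \<otimes> y) = cc y" by simp
        thus ?thesis by simp
      next
        case w: False
        let ?w = "x \<otimes> y"
        have wi: "inv x \<otimes> ?w = y" using x y by (simp add: m_assoc[symmetric])
        have g: "gcomm G (inv x) ?w \<noteq> \<one>"
        proof
          assume "gcomm G (inv x) ?w = \<one>"
          hence "inv x \<otimes> ?w = ?w \<otimes> inv x" using gcomm_one_iff x y by simp
          hence "y = (x \<otimes> y) \<otimes> inv x" using wi by simp
          hence "y \<otimes> x = x \<otimes> y" using x y by (simp add: inv_solve_right)
          thus False using nxy by simp
        qed
        have "cc y \<in> {cc (inv x), cc ?w, gcomm G (inv x) ?w}"
          using T3ns[OF _ ns_inv[OF x sx] _ w g] x y wi by simp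
        moreover have "cc y = \<one>" using cc_one_iff y sy by simp
        moreover have "cc ?w \<noteq> \<one>" "cc (inv x) \<noteq> \<one>" using cc_one_iff x y w ns_inv[OF x sx] by simp_all
        ultimately show ?thesis using g by auto
      qed
    qed
  qed
qed

end

theorem lemma3p12:
  fixes G :: "('g, 'b) monoid_scheme"
    and star :: "'g \<Rightarrow> 'g"
    and \<sigma> :: "'g \<Rightarrow> 'r::comm_ring_1"
    and c :: "'g \<Rightarrow> 'g"
  assumes grp: "group G"
    and char: "CHAR('r) \<noteq> 2"
    and star_closed: "\<forall>x\<in>carrier G. star x \<in> carrier G"
    and star_anti: "\<forall>x\<in>carrier G. \<forall>y\<in>carrier G. star (x \<otimes>\<^bsub>G\<^esub> y) = star y \<otimes>\<^bsub>G\<^esub> star x"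
    and star_invol: "\<forall>x\<in>carrier G. star (star x) = x"
    and sigma_hom: "\<forall>x\<in>carrier G. \<forall>y\<in>carrier G. \<sigma> (x \<otimes>\<^bsub>G\<^esub> y) = \<sigma> x * \<sigma> y"
    and sigma_unit: "\<forall>x\<in>carrier G. \<sigma> x dvd 1"
    and sigma_nontriv: "\<exists>x\<in>carrier G. \<sigma> x \<noteq> 1"
    and sigma_compat: "\<forall>x\<in>carrier G. \<sigma> (x \<otimes>\<^bsub>G\<^esub> star x) = 1"
    and anticomm: "anticommutative G (S_module G star \<sigma>)"
    and c_def: "\<forall>x\<in>carrier G. c x = star x \<otimes>\<^bsub>G\<^esub> inv\<^bsub>G\<^esub> x"
  shows "(\<forall>x\<in>carrier G. star x = c x \<otimes>\<^bsub>G\<^esub> x \<and> c x \<in> sym_elems G star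
            \<and> c x \<in> group_center G \<and> c x \<otimes>\<^bsub>G\<^esub> c x = \<one>\<^bsub>G\<^esub>)
       \<and> (\<forall>x\<in>carrier G. \<forall>y\<in>carrier G. c (x \<otimes>\<^bsub>G\<^esub> y) = c x \<otimes>\<^bsub>G\<^esub> c y \<otimes>\<^bsub>G\<^esub> gcomm G x y)
       \<and> (\<forall>x\<in>carrier G. \<forall>y\<in>carrier G. gcomm G x y \<noteq> \<one>\<^bsub>G\<^esub> \<longrightarrow>
            c (x \<otimes>\<^bsub>G\<^esub> y) \<in> {c x, c y, gcomm G x y})"

proof -
  interpret S: setting G star \<sigma>
    by (rule setting.intro[OF grp]) (unfold_locales, use assms in auto)
  have cE: "\<And>x. x \<in> carrier G \<Longrightarrow> c x = S.cc x" using c_def by (simp add: S.cc_def)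
  show ?thesis
  proof (intro conjI ballI impI)
    fix x assume x: "x \<in> carrier G"
    show "star x = c x \<otimes>\<^bsub>G\<^esub> x" using x cE S.cc_mul by simp
    show "c x \<in> sym_elems G star" using x cE S.cc_star by (simp add: sym_elems_def)
    show "c x \<in> group_center G" using x cE S.cc_central by (simp add: group_center_def)
    show "c x \<otimes>\<^bsub>G\<^esub> c x = \<one>\<^bsub>G\<^esub>" using x cE S.cc_sq by simp
  next
    fix x y assume x: "x \<in> carrier G" and y: "y \<in> carrier G"
    show "c (x \<otimes>\<^bsub>G\<^esub> y) = c x \<otimes>\<^bsub>G\<^esub> c y \<otimes>\<^bsub>G\<^esub> gcomm G x y" using x y cE S.T2 by simp
  next
    fix x y assume x: "x \<in> carrier G" and y: "y \<in> carrier G" and k: "gcomm G x y \<noteq> \<one>\<^bsub>G\<^esub>"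
    show "c (x \<otimes>\<^bsub>G\<^esub> y) \<in> {c x, c y, gcomm G x y}" using x y k cE S.T3gen by simp
  qed
qed


end
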